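(* Let $u \in \mathbb{N}$ and let $\mathrm{HFS}_u$ denote the universe of hereditarily finite sets with urelements $0,1,\dots,u-1$. Define $f_u : \mathrm{HFS}_u \to \mathbb{N}$ recursively by $f_u(x) = x$ if $x$ is an urelement (i.e. $x \in \{0,\dots,u-1\}$), and $f_u(x) = u + \sum_{a \in x} 2^{f_u(a)}$ if $x$ is a set. Then $f_u$ is a bijection between $\mathrm{HFS}_u$ and $\mathbb{N}$.
   Context: Urelements are objects having no elements, distinct from all sets; here the $u$ urelements are identified with the natural numbers $0,1,\dots,u-1$. $\mathrm{HFS}_u$ is the smallest collection containing these urelements and containing every finite set (possibly empty) all of whose elements belong to $\mathrm{HFS}_u$. For $u=0$ there are no urelements and $\mathrm{HFS}_0$ is the universe of pure hereditarily finite sets, with $f_0$ being Ackermann's encoding $f(x)=\sum_{a\in x}2^{f(a)}$ (so $f(\emptyset)=0$). $\mathbb{N}=\{0,1,2,\dots\}$. *)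

theory Defs
  imports Main "HOL-Library.FSet"
begin

datatype hfs = Ur nat | HSet "hfs fset"

inductive_set HFS :: "nat \<Rightarrow> hfs set" for u :: nat where
  ur: "n < u \<Longrightarrow> Ur n \<in> HFS u"
| set: "(\<forall>a. a |\<in>| A \<longrightarrow> a \<in> HFS u) \<Longrightarrow> HSet A \<in> HFS u"

lemma size_fmember_less: "x |\<in>| A \<Longrightarrow> size x < Suc (\<Sum>y\<in>fset A. Suc (size y))"
proof -
  assume "x |\<in>| A"
  then have "Suc (size x) \<le> (\<Sum>y\<in>fset A. Suc (size y))"
    by (intro member_le_sum) auto
  then show ?thesis by simp
qed

function f_enc :: "nat \<Rightarrow> hfs \<Rightarrow> nat" where
  "f_enc u (Ur n) = n"
| "f_enc u (HSet A) = u + (\<Sum>a\<in>fset A. 2 ^ f_enc u a)"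
  by pat_completeness auto
termination
  by (relation "measure (\<lambda>p. size (snd p))") (auto intro: size_fmember_less)

end

theory Submission imports Defs begin

lemma bit_sum_pow2:
  assumes "finite S"
  shows "bit (\<Sum>k\<in>S. (2::nat)^k) n \<longleftrightarrow> n \<in> S"
  using assms
proof (induction S arbitrary: n rule: finite_induct)
  case empty then show ?case by simp
next
  case (insert x S)
  have "(\<Sum>k\<in>insert x S. (2::nat)^k) = 2^x + (\<Sum>k\<in>S. 2^k)"
    using insert by simp
  moreover have "bit ((2::nat)^x + (\<Sum>k\<in>S. 2^k)) n \<longleftrightarrow> bit ((2::nat)^x) n \<or> bit (\<Sum>k\<in>S. (2::nat)^k) n"
    by (rule bit_disjunctive_add_iff) (use insert in \<open>auto simp: bit_exp_iff\<close>)
  ultimately show ?case using insert by (auto simp: bit_exp_iff)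
qed

lemma pow2_sum_inj:
  assumes "finite S" "finite T" "(\<Sum>k\<in>S. (2::nat)^k) = (\<Sum>k\<in>T. 2^k)"
  shows "S = T"
proof -
  have "\<And>n. n \<in> S \<longleftrightarrow> n \<in> T" using bit_sum_pow2[OF assms(1)] bit_sum_pow2[OF assms(2)] assms(3) by metis
  then show ?thesis by blast
qed

lemma pow2_sum_ex:
  "(\<Sum>k\<in>{k. k < m \<and> bit m k}. (2::nat)^k) = m"
proof -
  have "m < 2^m" by (simp add: less_exp)
  then have "m = take_bit m m" by (simp add: take_bit_nat_eq_self)
  also have "\<dots> = (\<Sum>k = 0..<m. push_bit k (of_bool (bit m k)))" by (rule take_bit_sum)
  also have "\<dots> = (\<Sum>k\<in>{0..<m}. if bit m k then 2^k else 0)"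
    by (intro sum.cong) (auto simp: push_bit_eq_mult)
  also have "\<dots> = (\<Sum>k\<in>{0..<m} \<inter> {k. bit m k}. (2::nat)^k)"
    by (simp add: sum.inter_restrict)
  also have "{0..<m} \<inter> {k. bit m k} = {k. k < m \<and> bit m k}" by auto
  finally show ?thesis by simp
qed
lemma elem_less: "a |\<in>| A \<Longrightarrow> f_enc u a < f_enc u (HSet A)"
proof -
  assume a: "a |\<in>| A"
  have "f_enc u a < 2 ^ f_enc u a" by (simp add: less_exp)
  also have "\<dots> \<le> (\<Sum>b\<in>fset A. 2 ^ f_enc u b)"
    using a by (intro member_le_sum) auto
  finally show ?thesis by simp
qed

lemma HFS_set_elems: "HSet A \<in> HFS u \<Longrightarrow> a |\<in>| A \<Longrightarrow> a \<in> HFS u"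
  by (auto elim: HFS.cases)

lemma f_inj_aux: "\<forall>x y. x \<in> HFS u \<and> y \<in> HFS u \<and> f_enc u x = n \<and> f_enc u y = n \<longrightarrow> x = y"
proof (induction n rule: less_induct)
  case (less n)
  show ?case
  proof (intro allI impI, elim conjE)
    fix x y assume x: "x \<in> HFS u" and y: "y \<in> HFS u" and fx: "f_enc u x = n" and fy: "f_enc u y = n"
    show "x = y"
    proof (cases x)
      case (Ur m)
      then show ?thesis using x y fx fy by (cases y) (auto elim!: HFS.cases)
    next
      case (HSet A)
      show ?thesis
      proof (cases y)
        case (Ur m)
        then show ?thesis using x y fx fy HSet by (auto elim!: HFS.cases)
      next
        case (HSet B)
        note xA = \<open>x = HSet A\<close>
        have IH: "a = b" if "a \<in> HFS u" "b \<in> HFS u" "f_enc u a < n" "f_enc u a = f_enc u b" for a b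
          using less.IH[of "f_enc u a"] that by auto
        have xA': "HSet A \<in> HFS u" using x xA by simp
        have yB': "HSet B \<in> HFS u" using y HSet by simp
        have injA: "inj_on (f_enc u) (fset A)"
          proof (rule inj_onI)
          fix a b assume "a \<in> fset A" "b \<in> fset A" "f_enc u a = f_enc u b"
          then show "a = b" using HFS_set_elems[OF xA'] elem_less[of _ A u] fx xA by (intro IH) auto
        qed
        have injB: "inj_on (f_enc u) (fset B)"
          proof (rule inj_onI)
          fix a b assume "a \<in> fset B" "b \<in> fset B" "f_enc u a = f_enc u b"
          then show "a = b" using HFS_set_elems[OF yB'] elem_less[of _ B u] fy HSet by (intro IH) auto
        qed
        have "(\<Sum>k\<in>f_enc u ` fset A. (2::nat)^k) = (\<Sum>a\<in>fset A. 2 ^ f_enc u a)"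
          using injA by (simp add: sum.reindex)
        also have "\<dots> = (\<Sum>a\<in>fset B. 2 ^ f_enc u a)" using fx fy xA HSet by simp
        also have "\<dots> = (\<Sum>k\<in>f_enc u ` fset B. (2::nat)^k)"
          using injB by (simp add: sum.reindex)
        finally have eq: "f_enc u ` fset A = f_enc u ` fset B"
          by (intro pow2_sum_inj) auto
        have "fset A \<subseteq> fset B"
        proof
          fix a assume a: "a \<in> fset A"
          then obtain b where b: "b \<in> fset B" "f_enc u b = f_enc u a" using eq by (metis imageE imageI)
          have "a = b" using a b HFS_set_elems[OF xA'] HFS_set_elems[OF yB'] elem_less[of a A u] fx xA by (intro IH) auto
          then show "a \<in> fset B" using b by simp
        qed
        moreover have "fset B \<subseteq> fset A"
        proof
          fix a assume a: "a \<in> fset B"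
          then obtain b where b: "b \<in> fset A" "f_enc u b = f_enc u a" using eq by (metis imageE imageI)
          have "a = b" using a b HFS_set_elems[OF xA'] HFS_set_elems[OF yB'] elem_less[of a B u] fy HSet by (intro IH) auto
          then show "a \<in> fset A" using b by simp
        qed
        ultimately show ?thesis using xA HSet by (simp add: fset_inject)
      qed
    qed
  qed
qed

lemma f_surj_aux: "\<exists>x \<in> HFS u. f_enc u x = n"
proof (induction n rule: less_induct)
  case (less n)
  show ?case
  proof (cases "n < u")
    case True then have "Ur n \<in> HFS u" by (rule HFS.ur)
    then show ?thesis by force
  next
    case False
    define m where "m = n - u"
    define S where "S = {k. k < m \<and> bit m k}"
    have kl: "\<And>k. k \<in> S \<Longrightarrow> k < n" using False by (auto simp: S_def m_def)
    define g where "g k = (SOME x. x \<in> HFS u \<and> f_enc u x = k)" for k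
    have g: "\<And>k. k \<in> S \<Longrightarrow> g k \<in> HFS u \<and> f_enc u (g k) = k"
      unfolding g_def by (rule someI_ex) (use less kl in blast)
    have fin: "finite S" by (simp add: S_def)
    define A where "A = Abs_fset (g ` S)"
    have fA: "fset A = g ` S" using fin by (simp add: A_def Abs_fset_inverse)
    have ing: "inj_on g S" by (rule inj_onI) (metis g)
    have "HSet A \<in> HFS u" using g fA by (intro HFS.set) auto
    moreover have "f_enc u (HSet A) = n"
    proof -
      have "(\<Sum>a\<in>fset A. (2::nat) ^ f_enc u a) = (\<Sum>k\<in>S. 2 ^ f_enc u (g k))"
        using ing by (simp add: fA sum.reindex)
      also have "\<dots> = (\<Sum>k\<in>S. 2 ^ k)" using g by simp
      also have "\<dots> = m" unfolding S_def by (rule pow2_sum_ex)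
      finally show ?thesis using False by (simp add: m_def)
    qed
    ultimately show ?thesis by blast
  qed
qed

theorem mainTheorem1:
  fixes u :: nat
  shows "bij_betw (f_enc u) (HFS u) (UNIV :: nat set)"
  unfolding bij_betw_def
proof
  show "inj_on (f_enc u) (HFS u)" using f_inj_aux by (auto simp: inj_on_def)
  show "f_enc u ` HFS u = UNIV" using f_surj_aux by (auto simp: image_iff) (metis)
qed

end
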